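(* Let $\sigma$ be a signature including $\{\triangleright, ;\}$ and let $\mathcal{A}$ be a $\sigma$-algebra that is representable by partial functions and whose atoms are separating. Let $\varphi$ be the first-order sentence asserting: for all $a,b,c$, if $c\ge a;x$ for every atom $x$ with $x\le b$, then $c\ge a;b$. Then composition in $\mathcal{A}$ is completely left-distributive over joins if and only if $\mathcal{A}\models\varphi$.
   Context: Signatures $\sigma$ are sets of operation symbols drawn from: $\triangleright$ (antidomain restriction), $;$ (composition), $\wedge$ (intersection), $\mathrm{upd}$ (update), $\sqcup$ (preferential union), $\mathsf{D}$ (domain), $\mathsf{A}$ (antidomain), interpreted on partial functions as: $f \triangleright g = \{(x,y) \in g : x \notin \mathrm{dom}(f)\}$; $f;g=\{(x,z):\exists y\,((x,y)\in f,(y,z)\in g)\}$; $f\wedge g = f\cap g$; $\mathrm{upd}(f,g)(x)$ is $f(x)$ if $f(x)$ defined and $g(x)$ undefined, $g(x)$ if both defined, undefined otherwise; $(f\sqcup g)(x)$ is $f(x)$ if defined, else $g(x)$; $\mathsf{D}(f)$ = identity on $\mathrm{dom}(f)$; $\mathsf{A}(f)$ = identity on the complement of $\mathrm{dom}(f)$ in the base. $\mathcal{A}$ is representable if isomorphic to a $\sigma$-algebra of partial functions with these operations. Define $0 := a\triangleright a$, $a\lhd b := (a\triangleright b)\triangleright b$, $a \le b :\iff a\lhd b = a$. An atom is a minimal nonzero element (expressible in first-order logic); atoms are separating if whenever $a\not\le b$ there is an atom $c\le a$ with $c\not\le b$. Composition is completely left-distributive over joins if for every $S$ with $\bigvee S$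 existing and every $a$, $\bigvee\{a;s:s\in S\}$ exists and equals $a;\bigvee S$. *)

theory Defs
  imports Main
begin

datatype opsym = ARes | Comp | Meet | Upd | Pref | DomOp | ADomOp

type_synonym signature = "opsym set"

text \<open>An algebra carrying (interpretations of) all possible operations;
  only those in the signature matter.\<close>
record 'a alg =
  carrier :: "'a set"
  ares :: "'a \<Rightarrow> 'a \<Rightarrow> 'a"
  comp :: "'a \<Rightarrow> 'a \<Rightarrow> 'a"
  meet :: "'a \<Rightarrow> 'a \<Rightarrow> 'a"
  upd  :: "'a \<Rightarrow> 'a \<Rightarrow> 'a"
  pref :: "'a \<Rightarrow> 'a \<Rightarrow> 'a"
  domo :: "'a \<Rightarrow> 'a"
  adomo :: "'a \<Rightarrow> 'a"

definition sig_algebra :: "signature \<Rightarrow> 'a alg \<Rightarrow> bool" where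
  "sig_algebra \<sigma> A \<longleftrightarrow> carrier A \<noteq> {} \<and>
     (\<forall>a\<in>carrier A. \<forall>b\<in>carrier A.
        (ARes \<in> \<sigma> \<longrightarrow> ares A a b \<in> carrier A) \<and>
        (Comp \<in> \<sigma> \<longrightarrow> comp A a b \<in> carrier A) \<and>
        (Meet \<in> \<sigma> \<longrightarrow> meet A a b \<in> carrier A) \<and>
        (Upd \<in> \<sigma> \<longrightarrow> upd A a b \<in> carrier A) \<and>
        (Pref \<in> \<sigma> \<longrightarrow> pref A a b \<in> carrier A) \<and>
        (DomOp \<in> \<sigma> \<longrightarrow> domo A a \<in> carrier A) \<and>
        (ADomOp \<in> \<sigma> \<longrightarrow> adomo A a \<in> carrier A))"

definition pf_ares :: "('b \<rightharpoonup> 'b) \<Rightarrow> ('b \<rightharpoonup> 'b) \<Rightarrow> ('b \<rightharpoonup> 'b)" where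
  "pf_ares f g = (\<lambda>x. if x \<in> dom f then None else g x)"

definition pf_comp :: "('b \<rightharpoonup> 'b) \<Rightarrow> ('b \<rightharpoonup> 'b) \<Rightarrow> ('b \<rightharpoonup> 'b)" where
  "pf_comp f g = (\<lambda>x. case f x of None \<Rightarrow> None | Some y \<Rightarrow> g y)"

definition pf_meet :: "('b \<rightharpoonup> 'b) \<Rightarrow> ('b \<rightharpoonup> 'b) \<Rightarrow> ('b \<rightharpoonup> 'b)" where
  "pf_meet f g = (\<lambda>x. if f x = g x then f x else None)"

definition pf_upd :: "('b \<rightharpoonup> 'b) \<Rightarrow> ('b \<rightharpoonup> 'b) \<Rightarrow> ('b \<rightharpoonup> 'b)" where
  "pf_upd f g = (\<lambda>x. if f x = None then None else if g x = None then f x else g x)"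

definition pf_pref :: "('b \<rightharpoonup> 'b) \<Rightarrow> ('b \<rightharpoonup> 'b) \<Rightarrow> ('b \<rightharpoonup> 'b)" where
  "pf_pref f g = (\<lambda>x. case f x of Some y \<Rightarrow> Some y | None \<Rightarrow> g x)"

definition pf_dom :: "('b \<rightharpoonup> 'b) \<Rightarrow> ('b \<rightharpoonup> 'b)" where
  "pf_dom f = (\<lambda>x. if x \<in> dom f then Some x else None)"

definition pf_adom :: "'b set \<Rightarrow> ('b \<rightharpoonup> 'b) \<Rightarrow> ('b \<rightharpoonup> 'b)" where
  "pf_adom X f = (\<lambda>x. if x \<in> X \<and> x \<notin> dom f then Some x else None)"

definition representation ::
    "signature \<Rightarrow> 'a alg \<Rightarrow> 'b set \<Rightarrow> ('a \<Rightarrow> ('b \<rightharpoonup> 'b)) \<Rightarrow> bool" where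
  "representation \<sigma> A X h \<longleftrightarrow>
     inj_on h (carrier A) \<and>
     (\<forall>a\<in>carrier A. dom (h a) \<subseteq> X \<and> ran (h a) \<subseteq> X) \<and>
     (\<forall>a\<in>carrier A. \<forall>b\<in>carrier A.
        (ARes \<in> \<sigma> \<longrightarrow> h (ares A a b) = pf_ares (h a) (h b)) \<and>
        (Comp \<in> \<sigma> \<longrightarrow> h (comp A a b) = pf_comp (h a) (h b)) \<and>
        (Meet \<in> \<sigma> \<longrightarrow> h (meet A a b) = pf_meet (h a) (h b)) \<and>
        (Upd \<in> \<sigma> \<longrightarrow> h (upd A a b) = pf_upd (h a) (h b)) \<and>
        (Pref \<in> \<sigma> \<longrightarrow> h (pref A a b) = pf_pref (h a) (h b)) \<and>
        (DomOp \<in> \<sigma> \<longrightarrow> h (domo A a) = pf_dom (h a)) \<and>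
        (ADomOp \<in> \<sigma> \<longrightarrow> h (adomo A a) = pf_adom X (h a)))"

text \<open>Representability with base set drawn from a type 'b; since 'b is a free
  type variable in the theorem, this covers every possible base set.\<close>
definition representable_over :: "'b itself \<Rightarrow> signature \<Rightarrow> 'a alg \<Rightarrow> bool" where
  "representable_over _ \<sigma> A \<longleftrightarrow> (\<exists>(X::'b set) h. representation \<sigma> A X h)"

definition zero :: "'a alg \<Rightarrow> 'a" where
  "zero A = (let a = (SOME a. a \<in> carrier A) in ares A a a)"

definition rres :: "'a alg \<Rightarrow> 'a \<Rightarrow> 'a \<Rightarrow> 'a" where
  "rres A a b = ares A (ares A a b) b"

definition leq :: "'a alg \<Rightarrow> 'a \<Rightarrow> 'a \<Rightarrow> bool" where
  "leq A a b \<longleftrightarrow> rres A a b = a"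

definition atom :: "'a alg \<Rightarrow> 'a \<Rightarrow> bool" where
  "atom A x \<longleftrightarrow> x \<in> carrier A \<and> x \<noteq> zero A \<and>
     (\<forall>y\<in>carrier A. leq A y x \<and> y \<noteq> zero A \<longrightarrow> y = x)"

definition atoms_separating :: "'a alg \<Rightarrow> bool" where
  "atoms_separating A \<longleftrightarrow>
     (\<forall>a\<in>carrier A. \<forall>b\<in>carrier A. \<not> leq A a b \<longrightarrow>
        (\<exists>c. atom A c \<and> leq A c a \<and> \<not> leq A c b))"

definition is_join :: "'a alg \<Rightarrow> 'a set \<Rightarrow> 'a \<Rightarrow> bool" where
  "is_join A S j \<longleftrightarrow> j \<in> carrier A \<and> (\<forall>s\<in>S. leq A s j) \<and>
     (\<forall>u\<in>carrier A. (\<forall>s\<in>S. leq A s u) \<longrightarrow> leq A j u)"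

definition comp_cld :: "'a alg \<Rightarrow> bool" where
  "comp_cld A \<longleftrightarrow>
     (\<forall>S j. S \<subseteq> carrier A \<and> is_join A S j \<longrightarrow>
        (\<forall>a\<in>carrier A. is_join A ((\<lambda>s. comp A a s) ` S) (comp A a j)))"

definition phi :: "'a alg \<Rightarrow> bool" where
  "phi A \<longleftrightarrow>
     (\<forall>a\<in>carrier A. \<forall>b\<in>carrier A. \<forall>c\<in>carrier A.
        (\<forall>x. atom A x \<and> leq A x b \<longrightarrow> leq A (comp A a x) c) \<longrightarrow>
        leq A (comp A a b) c)"

end

theory Submission
  imports Defs
begin

lemma rres_map: "pf_ares (pf_ares f g) g = (\<lambda>x. if x \<in> dom f then g x else None)"
  by (auto simp: pf_ares_def fun_eq_iff dom_def)

lemma restr_eq_iff: "((\<lambda>x. if x \<in> dom f then g x else None) = f) \<longleftrightarrow> f \<subseteq>\<^sub>m g"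
  by (auto simp: map_le_def fun_eq_iff dom_def split: if_splits)

lemma pf_comp_mono: "f \<subseteq>\<^sub>m g \<Longrightarrow> pf_comp a f \<subseteq>\<^sub>m pf_comp a g"
  by (auto simp: map_le_def pf_comp_def dom_def split: option.splits)

theorem lemma7p3:
  fixes \<sigma> :: signature and A :: "'a alg"
  assumes "{ARes, Comp} \<subseteq> \<sigma>"
    and "sig_algebra \<sigma> A"
    and "representable_over TYPE('b) \<sigma> A"
    and "atoms_separating A"
  shows "comp_cld A \<longleftrightarrow> phi A"
proof -
  obtain X :: "'b set" and h where rep: "representation \<sigma> A X h"
    using assms(3) unfolding representable_over_def by blast
  have inj: "inj_on h (carrier A)" using rep unfolding representation_def by blast
  have hares: "\<And>a b. a \<in> carrier A \<Longrightarrow> b \<in> carrier A \<Longrightarrow> h (ares A a b) = pf_ares (h a) (h b)"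
    using rep assms(1) unfolding representation_def by blast
  have hcomp: "\<And>a b. a \<in> carrier A \<Longrightarrow> b \<in> carrier A \<Longrightarrow> h (comp A a b) = pf_comp (h a) (h b)"
    using rep assms(1) unfolding representation_def by blast
  have cares: "\<And>a b. a \<in> carrier A \<Longrightarrow> b \<in> carrier A \<Longrightarrow> ares A a b \<in> carrier A"
    using assms(1,2) unfolding sig_algebra_def by blast
  have ccomp: "\<And>a b. a \<in> carrier A \<Longrightarrow> b \<in> carrier A \<Longrightarrow> comp A a b \<in> carrier A"
    using assms(1,2) unfolding sig_algebra_def by blast
  have ne: "carrier A \<noteq> {}" using assms(2) unfolding sig_algebra_def by blast
  have crres: "\<And>a b. a \<in> carrier A \<Longrightarrow> b \<in> carrier A \<Longrightarrow> rres A a b \<in> carrier A"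
    unfolding rres_def using cares by blast
  have hrres: "\<And>a b. a \<in> carrier A \<Longrightarrow> b \<in> carrier A \<Longrightarrow>
      h (rres A a b) = (\<lambda>x. if x \<in> dom (h a) then h b x else None)"
    unfolding rres_def using hares cares rres_map by metis
  have leq_iff: "\<And>a b. a \<in> carrier A \<Longrightarrow> b \<in> carrier A \<Longrightarrow> leq A a b \<longleftrightarrow> h a \<subseteq>\<^sub>m h b"
  proof -
    fix a b assume a: "a \<in> carrier A" and b: "b \<in> carrier A"
    have "leq A a b \<longleftrightarrow> h (rres A a b) = h a"
      unfolding leq_def using inj crres[OF a b] a by (metis inj_on_eq_iff)
    thus "leq A a b \<longleftrightarrow> h a \<subseteq>\<^sub>m h b" using hrres[OF a b] restr_eq_iff by metis
  qed
  define z where "z = (SOME a. a \<in> carrier A)"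
  have z: "z \<in> carrier A" unfolding z_def using ne by (simp add: some_in_eq)
  have zc: "zero A \<in> carrier A" unfolding zero_def Let_def z_def[symmetric] using cares z by blast
  have hz: "h (zero A) = Map.empty" unfolding zero_def Let_def z_def[symmetric]
    using hares[OF z z] by (auto simp: pf_ares_def fun_eq_iff)
  have atom_ne: "\<And>x. atom A x \<Longrightarrow> h x \<noteq> Map.empty"
    using inj zc hz unfolding atom_def by (metis inj_on_eq_iff)
  have leq_trans: "\<And>a b c. a \<in> carrier A \<Longrightarrow> b \<in> carrier A \<Longrightarrow> c \<in> carrier A \<Longrightarrow>
      leq A a b \<Longrightarrow> leq A b c \<Longrightarrow> leq A a c"
    using leq_iff map_le_trans by metis
  show ?thesis
  proof
    assume cld: "comp_cld A"
    show "phi A" unfolding phi_def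
    proof (intro ballI impI)
      fix a b c assume a: "a \<in> carrier A" and b: "b \<in> carrier A" and c: "c \<in> carrier A"
        and H: "\<forall>x. atom A x \<and> leq A x b \<longrightarrow> leq A (comp A a x) c"
      define S where "S = {x. atom A x \<and> leq A x b}"
      have Sc: "S \<subseteq> carrier A" unfolding S_def atom_def by blast
      have J: "is_join A S b" unfolding is_join_def
      proof (intro conjI ballI impI)
        show "b \<in> carrier A" by fact
        show "\<And>s. s \<in> S \<Longrightarrow> leq A s b" unfolding S_def by blast
        fix u assume u: "u \<in> carrier A" and U: "\<forall>s\<in>S. leq A s u"
        show "leq A b u"
        proof (rule ccontr)
          assume "\<not> leq A b u"
          then obtain c' where "atom A c'" "leq A c' b" "\<not> leq A c' u"
            using assms(4) b u unfolding atoms_separating_def by blast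
          thus False using U unfolding S_def by blast
        qed
      qed
      have "is_join A ((\<lambda>s. comp A a s) ` S) (comp A a b)"
        using cld Sc J a unfolding comp_cld_def by blast
      moreover have "\<forall>s\<in>(\<lambda>s. comp A a s) ` S. leq A s c" using H unfolding S_def by blast
      ultimately show "leq A (comp A a b) c" using c unfolding is_join_def by blast
    qed
  next
    assume ph: "phi A"
    show "comp_cld A" unfolding comp_cld_def
    proof (intro allI impI ballI)
      fix S j a assume SJ: "S \<subseteq> carrier A \<and> is_join A S j" and a: "a \<in> carrier A"
      hence Sc: "S \<subseteq> carrier A" and J: "is_join A S j" by auto
      have j: "j \<in> carrier A" using J unfolding is_join_def by blast
      have sj: "\<And>s. s \<in> S \<Longrightarrow> h s \<subseteq>\<^sub>m h j"
        using J Sc j leq_iff unfolding is_join_def by blast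
      have mono: "\<And>s. s \<in> carrier A \<Longrightarrow> h s \<subseteq>\<^sub>m h j \<Longrightarrow> leq A (comp A a s) (comp A a j)"
        using leq_iff ccomp hcomp a j pf_comp_mono by metis
      have key: "\<And>x. atom A x \<Longrightarrow> leq A x j \<Longrightarrow> \<exists>s\<in>S. h x \<subseteq>\<^sub>m h s"
      proof (rule ccontr)
        fix x assume at: "atom A x" and xj: "leq A x j" and N: "\<not> (\<exists>s\<in>S. h x \<subseteq>\<^sub>m h s)"
        have x: "x \<in> carrier A" using at unfolding atom_def by blast
        have hxj: "h x \<subseteq>\<^sub>m h j" using leq_iff x j xj by blast
        have disj: "\<And>s. s \<in> S \<Longrightarrow> dom (h s) \<inter> dom (h x) = {}"
        proof -
          fix s assume s: "s \<in> S"
          have sc: "s \<in> carrier A" using s Sc by blast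
          have r: "rres A s x \<in> carrier A" using crres sc x by blast
          have hr: "h (rres A s x) = (\<lambda>y. if y \<in> dom (h s) then h x y else None)"
            using hrres sc x by blast
          have "h (rres A s x) \<subseteq>\<^sub>m h x" unfolding hr by (auto simp: map_le_def dom_def)
          hence "leq A (rres A s x) x" using leq_iff r x by blast
          hence "rres A s x = zero A \<or> rres A s x = x" using at r unfolding atom_def by blast
          thus "dom (h s) \<inter> dom (h x) = {}"
          proof
            assume "rres A s x = zero A"
            hence "h (rres A s x) = Map.empty" using hz by simp
            thus ?thesis unfolding hr by (auto simp: fun_eq_iff dom_def split: if_splits; metis option.distinct(1))
          next
            assume "rres A s x = x"
            hence E: "h x = (\<lambda>y. if y \<in> dom (h s) then h x y else None)" using hr by simp
            have "h x \<subseteq>\<^sub>m h s"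
            proof (clarsimp simp: map_le_def)
              fix y v assume "h x y = Some v"
              moreover hence "y \<in> dom (h s)" using E by (metis option.distinct(1))
              ultimately show "Some v = h s y" using hxj sj[OF s]
                unfolding map_le_def by (metis domI)
            qed
            thus ?thesis using N s by blast
          qed
        qed
        define j' where "j' = ares A x j"
        have j'c: "j' \<in> carrier A" unfolding j'_def using cares x j by blast
        have hj': "h j' = pf_ares (h x) (h j)" unfolding j'_def using hares x j by blast
        have "\<forall>s\<in>S. leq A s j'"
        proof
          fix s assume s: "s \<in> S"
          have "h s \<subseteq>\<^sub>m h j'" unfolding hj' using sj[OF s] disj[OF s]
            by (auto simp: map_le_def pf_ares_def)
          thus "leq A s j'" using leq_iff s Sc j'c by blast
        qed
        hence "leq A j j'" using J j'c unfolding is_join_def by blast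
        hence hjj: "h j \<subseteq>\<^sub>m h j'" using leq_iff j j'c by blast
        obtain y v where yv: "h x y = Some v" using atom_ne[OF at] by (metis not_Some_eq ext)
        hence "h j y = Some v" using hxj unfolding map_le_def by (metis domI)
        hence "h j' y = Some v" using hjj unfolding map_le_def by (metis domI)
        moreover have "h j' y = None" unfolding hj' pf_ares_def using yv by auto
        ultimately show False by simp
      qed
      show "is_join A ((\<lambda>s. comp A a s) ` S) (comp A a j)" unfolding is_join_def
      proof (intro conjI ballI impI)
        show "comp A a j \<in> carrier A" using ccomp a j by blast
        show "\<And>t. t \<in> (\<lambda>s. comp A a s) ` S \<Longrightarrow> leq A t (comp A a j)"
          using mono sj Sc by blast
        fix u assume u: "u \<in> carrier A" and U: "\<forall>t\<in>(\<lambda>s. comp A a s) ` S. leq A t u"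
        have "\<forall>x. atom A x \<and> leq A x j \<longrightarrow> leq A (comp A a x) u"
        proof (intro allI impI)
          fix x assume ax: "atom A x \<and> leq A x j"
          have x: "x \<in> carrier A" using ax unfolding atom_def by blast
          obtain s where s: "s \<in> S" "h x \<subseteq>\<^sub>m h s" using key ax by blast
          have sc: "s \<in> carrier A" using s Sc by blast
          have "leq A (comp A a x) (comp A a s)"
            using leq_iff ccomp hcomp a x sc pf_comp_mono s(2) by metis
          moreover have "leq A (comp A a s) u" using U s by blast
          ultimately show "leq A (comp A a x) u"
            using leq_trans ccomp a x sc u by blast
        qed
        thus "leq A (comp A a j) u" using ph a j u unfolding phi_def by blast
      qed
    qed
  qed
qed

end
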